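(* For each $c\in\mathbb C$, each of the sets $S=\{J^{0,0},J^{1,0},J^{+,0},J^{-,0},J^{0,1}\}$ and $T=\{J^{0,0},J^{1,0},J^{+,0},J^{-,0},J^{+,1},J^{-,1}\}$ generates $\mathcal M_c(\widehat{\mathcal{SD}})$ as a vertex algebra (i.e. every element is a linear combination of iterated products $a_1\circ_{n_1}(a_2\circ_{n_2}(\cdots))$, $n_i\in\mathbb Z$, of elements of the set).
   Context: Let $D=t\frac{d}{dt}$. The Lie superalgebra $\mathcal{SD}$ of regular differential operators on the super circle is spanned by the elements $t^rF(D)$, $r\in\mathbb Z$, where $F(D)=\begin{pmatrix} f_0(D)&f_+(D)\\ f_-(D)&f_1(D)\end{pmatrix}$ with $f_a\in\mathbb C[x]$; diagonal entries are even and off-diagonal entries are odd. Its central extension $\widehat{\mathcal{SD}}=\mathcal{SD}\oplus\mathbb C C$ ($C$ central) has bracket $[t^rF(D),t^sG(D)]=t^{r+s}\big(F(D+s)G(D)-(-1)^{|F||G|}F(D)G(D+r)\big)+\Psi(t^rF(D),t^sG(D))\,C$, where $\Psi(t^rF(D),t^sG(D))=\sum_{j=-r}^{-1}\mathrm{Str}(F(j)G(j+r))$ if $r=-s\ge 0$ (extended by super-skew-symmetry) and $\Psi=0$ if $r+s\ne0$; here $\mathrm{Str}\begin{pmatrix}\alpha^0&\alpha^+\\ \alpha^-&\alpha^1\end{pmatrix}=\alpha^0-\alpha^1$. Let $M_0=E_{11}$, $M_1=E_{22}$, $M_+=E_{12}$, $M_-=E_{21}$ (matrix units), and for $a\in\{0,1,+,-\}$,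 $k\in\mathbb Z_{\ge0}$, $n\in\mathbb Z$ put $J^{a,k}_n=-t^{k+n}\partial_t^k M_a$. Let $\widehat{\mathcal{SP}}$ be the span of $C$ and of all $J^{a,k}_n$ with $k+n\ge0$; for $c\in\mathbb C$ let $\mathbb C_c$ be the one-dimensional $\widehat{\mathcal{SP}}$-module on which $C$ acts by $c$ and every $J^{a,k}_n$ acts by $0$. The vacuum module of central charge $c$ is $\mathcal M_c(\widehat{\mathcal{SD}})=U(\widehat{\mathcal{SD}})\otimes_{U(\widehat{\mathcal{SP}})}\mathbb C_c$; it is a vertex superalgebra freely generated by the fields $J^{a,k}(z)=\sum_{n\in\mathbb Z}J^{a,k}_nz^{-n-k-1}$, $k\ge0$, where $J^{0,k},J^{1,k}$ are even of conformal weight $k+1$, $J^{+,k}$ is odd of weight $k+\tfrac12$ and $J^{-,k}$ is odd of weight $k+\tfrac32$. *)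

theory Defs
  imports Complex_Main "HOL-Computational_Algebra.Polynomial" "HOL-Library.Poly_Mapping"
begin

text \<open>Matrix units: M0 = E11, M1 = E22, Mp = E12, Mm = E21.\<close>
datatype lbl = L0 | L1 | Lp | Lm

fun lbl_row :: "lbl \<Rightarrow> nat" where
  "lbl_row L0 = 1" | "lbl_row L1 = 2" | "lbl_row Lp = 1" | "lbl_row Lm = 2"
fun lbl_col :: "lbl \<Rightarrow> nat" where
  "lbl_col L0 = 1" | "lbl_col L1 = 2" | "lbl_col Lp = 2" | "lbl_col Lm = 1"

definition lbl_of :: "nat \<Rightarrow> nat \<Rightarrow> lbl" where
  "lbl_of i j = (if i = 1 then (if j = 1 then L0 else Lp) else (if j = 1 then Lm else L1))"

definition lbl_mult :: "lbl \<Rightarrow> lbl \<Rightarrow> lbl option" where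
  "lbl_mult a b = (if lbl_col a = lbl_row b then Some (lbl_of (lbl_row a) (lbl_col b)) else None)"

definition lbl_odd :: "lbl \<Rightarrow> bool" where
  "lbl_odd a = (a = Lp \<or> a = Lm)"

definition str_lbl :: "lbl \<Rightarrow> complex" where
  "str_lbl a = (if a = L0 then 1 else if a = L1 then -1 else 0)"

text \<open>An element of the central extension: finitely supported
  sum over (r,a) of t^r f_{r,a}(D) M_a, plus a multiple of C.\<close>
type_synonym sdel = "((int \<times> lbl) \<Rightarrow>\<^sub>0 complex poly) \<times> complex"

definition sd_add :: "sdel \<Rightarrow> sdel \<Rightarrow> sdel" where
  "sd_add x y = (fst x + fst y, snd x + snd y)"

definition sd_scale :: "complex \<Rightarrow> sdel \<Rightarrow> sdel" where
  "sd_scale k x = (Poly_Mapping.map (smult k) (fst x), k * snd x)"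

datatype mono = Mono int lbl "complex poly" | Cen

fun mono_el :: "mono \<Rightarrow> sdel" where
  "mono_el (Mono r a f) = (Poly_Mapping.single (r, a) f, 0)"
| "mono_el Cen = (0, 1)"

fun mono_odd :: "mono \<Rightarrow> bool" where
  "mono_odd (Mono r a f) = lbl_odd a"
| "mono_odd Cen = False"

definition sgn_par :: "mono \<Rightarrow> mono \<Rightarrow> complex" where
  "sgn_par x y = (if mono_odd x \<and> mono_odd y then -1 else 1)"

definition shiftD :: "complex poly \<Rightarrow> int \<Rightarrow> complex poly" where
  "shiftD f s = pcompose f [:of_int s, 1:]"

definition term_el :: "int \<Rightarrow> lbl option \<Rightarrow> complex poly \<Rightarrow> (int \<times> lbl) \<Rightarrow>\<^sub>0 complex poly" where
  "term_el r c h = (case c of None \<Rightarrow> 0 | Some c' \<Rightarrow> Poly_Mapping.single (r, c') h)"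

text \<open>The cocycle Psi on homogeneous elements, r = -s \<ge> 0 case, with
  Str(F(j) G(j+r)) = f(j) g(j+r) Str(M_a M_b).\<close>
definition psi0 :: "int \<Rightarrow> lbl \<Rightarrow> complex poly \<Rightarrow> lbl \<Rightarrow> complex poly \<Rightarrow> complex" where
  "psi0 r a f b g =
     (\<Sum>j\<in>{-r..-1}. poly f (of_int j) * poly g (of_int (j + r)) *
        (case lbl_mult a b of None \<Rightarrow> 0 | Some c \<Rightarrow> str_lbl c))"

definition psi :: "int \<Rightarrow> lbl \<Rightarrow> complex poly \<Rightarrow> int \<Rightarrow> lbl \<Rightarrow> complex poly \<Rightarrow> complex" where
  "psi r a f s b g =
     (if r + s \<noteq> 0 then 0
      else if r \<ge> 0 then psi0 r a f b g
      else - (if lbl_odd a \<and> lbl_odd b then -1 else 1) * psi0 s b g a f)"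

text \<open>The super bracket
  [t^r F(D), t^s G(D)] = t^{r+s}(F(D+s)G(D) - (-1)^{|F||G|} G(D+r)F(D)) + Psi C,
  and C central.\<close>
fun sd_bracket :: "mono \<Rightarrow> mono \<Rightarrow> sdel" where
  "sd_bracket (Mono r a f) (Mono s b g) =
     (term_el (r + s) (lbl_mult a b) (shiftD f s * g)
        - term_el (r + s) (lbl_mult b a) (smult (if lbl_odd a \<and> lbl_odd b then -1 else 1) (shiftD g r * f)),
      psi r a f s b g)"
| "sd_bracket Cen y = (0, 0)"
| "sd_bracket x Cen = (0, 0)"

text \<open>Falling factorial D(D-1)...(D-k+1) = t^k d^k/dt^k.\<close>
definition ffD :: "nat \<Rightarrow> complex poly" where
  "ffD k = (\<Prod>i<k. [:- of_nat i, 1:])"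

text \<open>J^{a,k}_n = - t^{k+n} d_t^k M_a = - t^n D(D-1)...(D-k+1) M_a.\<close>
definition Jmode :: "lbl \<Rightarrow> nat \<Rightarrow> int \<Rightarrow> mono" where
  "Jmode a k n = Mono n a (- ffD k)"

text \<open>Tensor algebra: formal linear combinations of words of elements
  (a word x_1 ... x_m stands for x_1 \<otimes> ... \<otimes> x_m, acting on the vacuum,
  x_m first).\<close>
type_synonym tel = "sdel list \<Rightarrow> complex"

definition wd :: "sdel list \<Rightarrow> tel" where
  "wd w = (\<lambda>u. if u = w then 1 else 0)"

inductive_set cspan :: "tel set \<Rightarrow> tel set" for A where
  cspan_zero: "(\<lambda>_. 0) \<in> cspan A"
| cspan_base: "x \<in> A \<Longrightarrow> x \<in> cspan A"
| cspan_add: "x \<in> cspan A \<Longrightarrow> y \<in> cspan A \<Longrightarrow> (\<lambda>u. x u + y u) \<in> cspan A"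
| cspan_scale: "x \<in> cspan A \<Longrightarrow> (\<lambda>u. k * x u) \<in> cspan A"

text \<open>Generators of the subspace L_c: multilinearity (defining the tensor algebra),
  the two-sided ideal of the super commutator relations (defining U),
  and the left ideal generated by SP^ acting via the character C \<mapsto> c, J \<mapsto> 0.\<close>
inductive_set vac_rel :: "complex \<Rightarrow> tel set" for c where
  rel_add: "(\<lambda>u. wd (w1 @ [sd_add x y] @ w2) u - wd (w1 @ [x] @ w2) u - wd (w1 @ [y] @ w2) u) \<in> vac_rel c"
| rel_scale: "(\<lambda>u. wd (w1 @ [sd_scale k x] @ w2) u - k * wd (w1 @ [x] @ w2) u) \<in> vac_rel c"
| rel_comm: "(\<lambda>u. wd (w1 @ [mono_el x, mono_el y] @ w2) u
               - sgn_par x y * wd (w1 @ [mono_el y, mono_el x] @ w2) u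
               - wd (w1 @ [sd_bracket x y] @ w2) u) \<in> vac_rel c"
| rel_ann: "int k + n \<ge> 0 \<Longrightarrow> wd (w @ [mono_el (Jmode a k n)]) \<in> vac_rel c"
| rel_cent: "(\<lambda>u. wd (w @ [mono_el Cen]) u - c * wd w u) \<in> vac_rel c"

text \<open>The kernel L_c of T(SD^) \<rightarrow> M_c; M_c = cspan (range wd) / vac_ideal c,
  with vacuum vector the class of the empty word.\<close>
definition vac_ideal :: "complex \<Rightarrow> tel set" where
  "vac_ideal c = cspan (vac_rel c)"

text \<open>For a generator J^{a,k} (state J^{a,k}_{-k-1}|0>), with field
  J^{a,k}(z) = \<Sum>_n J^{a,k}_n z^{-n-k-1} = \<Sum>_m (J^{a,k})_{(m)} z^{-m-1},
  the m-th product J^{a,k} \<circ>_m v is J^{a,k}_{m-k} v.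
  Iterated products of generators from G (starting from the vacuum; note
  J^{a,k} = J^{a,k} \<circ>_{-1} |0>), represented by words.\<close>
inductive_set iter_prods :: "(lbl \<times> nat) set \<Rightarrow> sdel list set" for G where
  ip_vac: "[] \<in> iter_prods G"
| ip_step: "(a, k) \<in> G \<Longrightarrow> w \<in> iter_prods G \<Longrightarrow>
     mono_el (Jmode a k (m - int k)) # w \<in> iter_prods G"

definition generates_vac :: "complex \<Rightarrow> (lbl \<times> nat) set \<Rightarrow> bool" where
  "generates_vac c G \<longleftrightarrow>
     (\<forall>v \<in> cspan (range wd). v \<in> cspan (wd ` iter_prods G \<union> vac_ideal c))"

end

theory Submission
  imports Defs
begin


lemma cspan_diff: "x \<in> cspan A \<Longrightarrow> y \<in> cspan A \<Longrightarrow> (\<lambda>u. x u - y u) \<in> cspan A"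
proof -
  assume "x \<in> cspan A" "y \<in> cspan A"
  then have "(\<lambda>u. x u + (-1) * y u) \<in> cspan A" by (intro cspan_add cspan_scale)
  then show ?thesis by simp
qed

lemma cspan_mono: assumes "A \<subseteq> B" "x \<in> cspan A" shows "x \<in> cspan B"
  using assms(2) by (induction x rule: cspan.induct) (use assms(1) in \<open>auto intro: cspan.intros\<close>)

lemma cspan_cspan: "x \<in> cspan (cspan A) \<Longrightarrow> x \<in> cspan A"
  by (induction x rule: cspan.induct) (auto intro: cspan.intros)

definition VV :: "complex \<Rightarrow> (lbl \<times> nat) set \<Rightarrow> tel set" where
  "VV c G = cspan (wd ` iter_prods G \<union> vac_ideal c)"

lemma ideal_VV: "x \<in> vac_ideal c \<Longrightarrow> x \<in> VV c G"
  unfolding VV_def by (auto intro: cspan_base)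

lemma rel_VV: "x \<in> vac_rel c \<Longrightarrow> x \<in> VV c G"
  by (rule ideal_VV) (simp add: vac_ideal_def cspan_base)

lemma iter_VV: "u \<in> iter_prods G \<Longrightarrow> wd u \<in> VV c G"
  unfolding VV_def by (auto intro: cspan_base)

lemma VV_add: "x \<in> VV c G \<Longrightarrow> y \<in> VV c G \<Longrightarrow> (\<lambda>u. x u + y u) \<in> VV c G"
  unfolding VV_def by (rule cspan_add)
lemma VV_diff: "x \<in> VV c G \<Longrightarrow> y \<in> VV c G \<Longrightarrow> (\<lambda>u. x u - y u) \<in> VV c G"
  unfolding VV_def by (rule cspan_diff)
lemma VV_scale: "x \<in> VV c G \<Longrightarrow> (\<lambda>u. k * x u) \<in> VV c G"
  unfolding VV_def by (rule cspan_scale)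
lemma VV_zero: "(\<lambda>_. 0) \<in> VV c G"
  unfolding VV_def by (rule cspan_zero)

lemma VV_from_diff: "(\<lambda>u. x u - y u) \<in> VV c G \<Longrightarrow> y \<in> VV c G \<Longrightarrow> x \<in> VV c G"
  using VV_add[of "\<lambda>u. x u - y u" c G y] by simp

definition pre :: "sdel \<Rightarrow> tel \<Rightarrow> tel" where
  "pre x v = (\<lambda>u. case u of [] \<Rightarrow> 0 | y # u' \<Rightarrow> if y = x then v u' else 0)"

lemma pre_wd: "pre x (wd w) = wd (x # w)"
  by (auto simp: pre_def wd_def fun_eq_iff split: list.split)

lemma pre_diff: "pre x (\<lambda>u. f u - g u) = (\<lambda>u. pre x f u - pre x g u)"
  unfolding pre_def by (rule ext) (simp split: list.split)
lemma pre_sc: "pre x (\<lambda>u. k * f u) = (\<lambda>u. k * pre x f u)"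
  unfolding pre_def by (rule ext) (simp split: list.split)

lemma pre_rel: "v \<in> vac_rel c \<Longrightarrow> pre x v \<in> vac_rel c"
proof (induction v rule: vac_rel.induct)
  case (rel_add w1 x' y w2)
  show ?case using vac_rel.rel_add[of "x#w1" x' y w2 c] by (simp only: pre_diff pre_wd append_Cons)
next
  case (rel_scale w1 k x' w2)
  show ?case using vac_rel.rel_scale[of "x#w1" k x' w2 c] by (simp only: pre_diff pre_sc pre_wd append_Cons)
next
  case (rel_comm w1 x' y w2)
  show ?case using vac_rel.rel_comm[of "x#w1" x' y w2 c] by (simp only: pre_diff pre_sc pre_wd append_Cons)
next
  case (rel_ann k n w a)
  show ?case using vac_rel.rel_ann[where w="x#w" and k=k and n=n and a=a and c=c] rel_ann by (simp only: pre_wd append_Cons)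
next
  case (rel_cent w)
  show ?case using vac_rel.rel_cent[where w="x#w" and c=c] by (simp only: pre_diff pre_sc pre_wd append_Cons)
qed

lemma pre_cspan: assumes h: "\<And>v. v \<in> A \<Longrightarrow> pre x v \<in> cspan B" and "v \<in> cspan A" shows "pre x v \<in> cspan B"
  using assms(2)
proof (induction v rule: cspan.induct)
  case cspan_zero
  have "pre x (\<lambda>_. 0) = (\<lambda>_. 0)" by (auto simp: pre_def fun_eq_iff split: list.split)
  then show ?case by (simp add: cspan.cspan_zero)
next
  case (cspan_base v) then show ?case by (rule h)
next
  case (cspan_add v1 v2)
  have "pre x (\<lambda>u. v1 u + v2 u) = (\<lambda>u. pre x v1 u + pre x v2 u)"
    by (auto simp: pre_def fun_eq_iff split: list.split)
  then show ?case using cspan_add by (simp add: cspan.cspan_add)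
next
  case (cspan_scale v k)
  have "pre x (\<lambda>u. k * v u) = (\<lambda>u. k * pre x v u)"
    by (auto simp: pre_def fun_eq_iff split: list.split)
  then show ?case using cspan_scale by (simp add: cspan.cspan_scale)
qed

lemma pre_ideal: "v \<in> vac_ideal c \<Longrightarrow> pre x v \<in> vac_ideal c"
  unfolding vac_ideal_def by (rule pre_cspan) (auto intro: cspan_base pre_rel)

definition good :: "complex \<Rightarrow> (lbl \<times> nat) set \<Rightarrow> sdel \<Rightarrow> bool" where
  "good c G x \<longleftrightarrow> (\<forall>u \<in> iter_prods G. wd (x # u) \<in> VV c G)"

lemma pre_VV: "good c G x \<Longrightarrow> v \<in> VV c G \<Longrightarrow> pre x v \<in> VV c G"
  unfolding VV_def
  apply (rule pre_cspan[where A = "wd ` iter_prods G \<union> vac_ideal c"])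
   apply (auto simp: pre_wd good_def VV_def)
  apply (rule cspan_base) using pre_ideal apply blast
  done

lemma all_good: "(\<And>x. good c G x) \<Longrightarrow> generates_vac c G"
proof -
  assume g: "\<And>x. good c G x"
  have w: "wd w \<in> VV c G" for w
  proof (induction w)
    case Nil then show ?case by (simp add: iter_VV iter_prods.ip_vac)
  next
    case (Cons x w) then show ?case using pre_VV[OF g] by (simp add: pre_wd[symmetric])
  qed
  have "v \<in> cspan (range wd) \<Longrightarrow> v \<in> VV c G" for v
    by (induction v rule: cspan.induct) (auto intro: VV_add VV_scale VV_zero w)
  then show ?thesis unfolding generates_vac_def VV_def by blast
qed




lemma VV_cong: "f \<in> VV c G \<Longrightarrow> (\<And>u. g u = f u) \<Longrightarrow> g \<in> VV c G"
proof -
  assume "f \<in> VV c G" "\<And>u. g u = f u"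
  then have "g = f" by (simp add: fun_eq_iff)
  then show ?thesis using \<open>f \<in> VV c G\<close> by simp
qed

lemma VV_lc: "x \<in> VV c G \<Longrightarrow> y \<in> VV c G \<Longrightarrow> (\<lambda>u. a * x u + b * y u) \<in> VV c G"
  by (intro VV_add VV_scale)

lemma good_add: assumes "good c G x" "good c G y" shows "good c G (sd_add x y)"
  unfolding good_def
proof
  fix u assume u: "u \<in> iter_prods G"
  have R: "(\<lambda>v. wd (sd_add x y # u) v - wd (x # u) v - wd (y # u) v) \<in> VV c G"
    using vac_rel.rel_add[of "[]" x y u c] by (simp add: rel_VV)
  have "(\<lambda>v. (wd (sd_add x y # u) v - wd (x # u) v - wd (y # u) v) + (wd (x # u) v + wd (y # u) v)) \<in> VV c G"
    using R assms u unfolding good_def by (intro VV_add) auto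
  then show "wd (sd_add x y # u) \<in> VV c G" by (rule VV_cong) simp
qed

lemma good_scale: assumes "good c G x" shows "good c G (sd_scale k x)"
  unfolding good_def
proof
  fix u assume u: "u \<in> iter_prods G"
  have R: "(\<lambda>v. wd (sd_scale k x # u) v - k * wd (x # u) v) \<in> VV c G"
    using vac_rel.rel_scale[of "[]" k x u c] by (simp add: rel_VV)
  have "(\<lambda>v. (wd (sd_scale k x # u) v - k * wd (x # u) v) + k * wd (x # u) v) \<in> VV c G"
    using R assms u unfolding good_def by (intro VV_add VV_scale) auto
  then show "wd (sd_scale k x # u) \<in> VV c G" by (rule VV_cong) simp
qed

lemma pm_map_zero: "Poly_Mapping.map (smult (0::complex)) p = 0"
  by (simp add: map_eq_zero_iff)

lemma pm_map_0: "Poly_Mapping.map (smult (k::complex)) 0 = 0"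
  by (simp add: map_eq_zero_iff)

lemma sd_scale_0: "sd_scale 0 x = (0, 0)"
  by (simp add: sd_scale_def pm_map_zero)

lemma zero_word_ideal: "wd (w1 @ [(0,0)] @ w2) \<in> vac_ideal c"
proof -
  have "(\<lambda>v. wd (w1 @ [sd_scale 0 x] @ w2) v - 0 * wd (w1 @ [x] @ w2) v) \<in> vac_ideal c"
    unfolding vac_ideal_def by (rule cspan_base) (rule vac_rel.rel_scale)
  then show ?thesis by (simp add: sd_scale_0)
qed

lemma good_zero: "good c G (0, 0)"
  unfolding good_def using zero_word_ideal[of "[]" _ c] by (auto intro: ideal_VV)

lemma cen_comm:
  assumes "u \<in> iter_prods G"
  shows "(\<lambda>v. wd (w1 @ mono_el Cen # u) v - c * wd (w1 @ u) v) \<in> vac_ideal c"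
  using assms
proof (induction u arbitrary: w1 rule: iter_prods.induct)
  case ip_vac
  show ?case using vac_rel.rel_cent[of w1 c] unfolding vac_ideal_def by (auto intro: cspan_base)
next
  case (ip_step a k w m)
  let ?J = "Jmode a k (m - int k)"
  have R: "(\<lambda>v. wd (w1 @ [mono_el Cen, mono_el ?J] @ w) v - sgn_par Cen ?J * wd (w1 @ [mono_el ?J, mono_el Cen] @ w) v
               - wd (w1 @ [sd_bracket Cen ?J] @ w) v) \<in> vac_ideal c"
    unfolding vac_ideal_def by (rule cspan_base) (rule vac_rel.rel_comm)
  have Z: "wd (w1 @ [sd_bracket Cen ?J] @ w) \<in> vac_ideal c"
    using zero_word_ideal[of w1 w c] by (simp add: Jmode_def)
  have I: "(\<lambda>v. wd ((w1 @ [mono_el ?J]) @ mono_el Cen # w) v - c * wd ((w1 @ [mono_el ?J]) @ w) v) \<in> vac_ideal c"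
    by (rule ip_step.IH)
  have "(\<lambda>v. (wd (w1 @ [mono_el Cen, mono_el ?J] @ w) v - sgn_par Cen ?J * wd (w1 @ [mono_el ?J, mono_el Cen] @ w) v
               - wd (w1 @ [sd_bracket Cen ?J] @ w) v) + wd (w1 @ [sd_bracket Cen ?J] @ w) v
             + (wd ((w1 @ [mono_el ?J]) @ mono_el Cen # w) v - c * wd ((w1 @ [mono_el ?J]) @ w) v)) \<in> vac_ideal c"
    unfolding vac_ideal_def using R Z I unfolding vac_ideal_def by (intro cspan_add)
  moreover have "sgn_par Cen ?J = 1" by (simp add: sgn_par_def)
  ultimately show ?case by simp
qed

lemma good_cen: "good c G (mono_el Cen)"
  unfolding good_def
proof
  fix u assume u: "u \<in> iter_prods G"
  have "(\<lambda>v. (wd ([] @ mono_el Cen # u) v - c * wd ([] @ u) v) + c * wd u v) \<in> VV c G"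
    using cen_comm[OF u, of "[]"] u by (intro VV_add VV_scale ideal_VV iter_VV) auto
  then show "wd (mono_el Cen # u) \<in> VV c G" by (rule VV_cong) simp
qed

lemma good_br: assumes gx: "good c G (mono_el x)" and gy: "good c G (mono_el y)"
  shows "good c G (sd_bracket x y)"
  unfolding good_def
proof
  fix u assume u: "u \<in> iter_prods G"
  have R: "(\<lambda>v. wd (mono_el x # mono_el y # u) v - sgn_par x y * wd (mono_el y # mono_el x # u) v
               - wd (sd_bracket x y # u) v) \<in> VV c G"
    using vac_rel.rel_comm[of "[]" x y u c] by (simp add: rel_VV)
  have A: "wd (mono_el x # mono_el y # u) \<in> VV c G"
    using pre_VV[OF gx, of "wd (mono_el y # u)"] gy u by (simp add: pre_wd good_def)
  have B: "wd (mono_el y # mono_el x # u) \<in> VV c G"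
    using pre_VV[OF gy, of "wd (mono_el x # u)"] gx u by (simp add: pre_wd good_def)
  from VV_lc[OF VV_lc[OF R A, of "-1" 1] B, of 1 "- sgn_par x y"]
  show "wd (sd_bracket x y # u) \<in> VV c G" by (rule VV_cong) (simp add: algebra_simps)
qed

lemma good_br2: assumes gx: "good c G (mono_el x)" and gy: "good c G (sd_add (mono_el y1) (mono_el y2))"
  and sg: "sgn_par x y1 = sgn_par x y2"
  shows "good c G (sd_add (sd_bracket x y1) (sd_bracket x y2))"
  unfolding good_def
proof
  fix u assume u: "u \<in> iter_prods G"
  let ?Y = "sd_add (mono_el y1) (mono_el y2)"
  let ?s = "sgn_par x y1"
  have R1: "(\<lambda>v. wd (mono_el x # mono_el y1 # u) v - ?s * wd (mono_el y1 # mono_el x # u) v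
               - wd (sd_bracket x y1 # u) v) \<in> VV c G"
    using vac_rel.rel_comm[of "[]" x y1 u c] by (simp add: rel_VV)
  have R2: "(\<lambda>v. wd (mono_el x # mono_el y2 # u) v - ?s * wd (mono_el y2 # mono_el x # u) v
               - wd (sd_bracket x y2 # u) v) \<in> VV c G"
    using vac_rel.rel_comm[of "[]" x y2 u c] sg by (simp add: rel_VV)
  have R3: "(\<lambda>v. wd (sd_add (sd_bracket x y1) (sd_bracket x y2) # u) v - wd (sd_bracket x y1 # u) v
          - wd (sd_bracket x y2 # u) v) \<in> VV c G"
    using vac_rel.rel_add[of "[]" "sd_bracket x y1" "sd_bracket x y2" u c] by (simp add: rel_VV)
  have R4: "(\<lambda>v. wd (mono_el x # ?Y # u) v - wd (mono_el x # mono_el y1 # u) v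
          - wd (mono_el x # mono_el y2 # u) v) \<in> VV c G"
    using vac_rel.rel_add[of "[mono_el x]" "mono_el y1" "mono_el y2" u c] by (simp add: rel_VV)
  have R5: "(\<lambda>v. wd (?Y # mono_el x # u) v - wd (mono_el y1 # mono_el x # u) v
          - wd (mono_el y2 # mono_el x # u) v) \<in> VV c G"
    using vac_rel.rel_add[of "[]" "mono_el y1" "mono_el y2" "mono_el x # u" c] by (simp add: rel_VV)
  have A: "wd (mono_el x # ?Y # u) \<in> VV c G"
    using pre_VV[OF gx, of "wd (?Y # u)"] gy u by (simp add: pre_wd good_def)
  have B: "wd (?Y # mono_el x # u) \<in> VV c G"
    using pre_VV[OF gy, of "wd (mono_el x # u)"] gx u by (simp add: pre_wd good_def)
  from VV_lc[OF VV_lc[OF VV_lc[OF VV_lc[OF VV_lc[OF VV_lc[OF R3 R1, of 1 "-1"] R2, of 1 "-1"] R4, of 1 "-1"] A, of 1 1] R5, of 1 ?s] B, of 1 "- ?s"]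
  show "wd (sd_add (sd_bracket x y1) (sd_bracket x y2) # u) \<in> VV c G"
    by (rule VV_cong) (simp add: algebra_simps)
qed




definition goodP :: "complex \<Rightarrow> (lbl \<times> nat) set \<Rightarrow> ((int \<times> lbl) \<Rightarrow>\<^sub>0 complex poly) \<Rightarrow> bool" where
  "goodP c G p \<longleftrightarrow> good c G (p, 0)"

definition goodS :: "complex \<Rightarrow> (lbl \<times> nat) set \<Rightarrow> int \<Rightarrow> lbl \<Rightarrow> complex poly \<Rightarrow> bool" where
  "goodS c G r a f \<longleftrightarrow> goodP c G (Poly_Mapping.single (r, a) f)"

lemma goodS_mono: "good c G (mono_el (Mono r a f)) = goodS c G r a f"
  by (simp add: goodS_def goodP_def)

lemma good_goodP: "good c G (p, z) \<Longrightarrow> goodP c G p"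
proof -
  assume "good c G (p, z)"
  then have "good c G (sd_add (p, z) (sd_scale (-z) (mono_el Cen)))"
    by (intro good_add good_scale good_cen)
  then show ?thesis by (simp add: goodP_def sd_add_def sd_scale_def pm_map_0)
qed

lemma goodP_good: "goodP c G p \<Longrightarrow> good c G (p, z)"
proof -
  assume "goodP c G p"
  then have "good c G (sd_add (p, 0) (sd_scale z (mono_el Cen)))"
    unfolding goodP_def by (intro good_add good_scale good_cen)
  then show ?thesis by (simp add: sd_add_def sd_scale_def pm_map_0)
qed

lemma goodP_0: "goodP c G 0"
  using good_zero by (simp add: goodP_def)

lemma goodP_add: "goodP c G p \<Longrightarrow> goodP c G q \<Longrightarrow> goodP c G (p + q)"
  unfolding goodP_def using good_add[of c G "(p,0)" "(q,0)"] by (simp add: sd_add_def)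

lemma goodP_smult: "goodP c G p \<Longrightarrow> goodP c G (Poly_Mapping.map (smult k) p)"
  unfolding goodP_def using good_scale[of c G "(p,0)" k] by (simp add: sd_scale_def)

lemma pm_map_m1: "Poly_Mapping.map (smult (-1::complex)) p = - p"
  by transfer (simp add: fun_eq_iff when_def)

lemma goodP_uminus: "goodP c G p \<Longrightarrow> goodP c G (- p)"
  using goodP_smult[of c G p "-1"] by (simp add: pm_map_m1)

lemma goodP_diff: "goodP c G p \<Longrightarrow> goodP c G q \<Longrightarrow> goodP c G (p - q)"
  using goodP_add[of c G p "-q"] goodP_uminus[of c G q] by simp

lemma goodP_sum: "finite A \<Longrightarrow> (\<And>k. k \<in> A \<Longrightarrow> goodP c G (f k)) \<Longrightarrow> goodP c G (sum f A)"
  by (induction A rule: finite_induct) (auto intro: goodP_0 goodP_add)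

lemma pm_decomp: "p = (\<Sum>k\<in>Poly_Mapping.keys p. Poly_Mapping.single k (Poly_Mapping.lookup p k))"
proof (rule poly_mapping_eqI)
  fix i
  show "Poly_Mapping.lookup p i = Poly_Mapping.lookup (\<Sum>k\<in>Poly_Mapping.keys p. Poly_Mapping.single k (Poly_Mapping.lookup p k)) i"
    by (simp add: lookup_sum lookup_single when_def in_keys_iff)
qed

lemma goodS_all: "(\<And>r a f. goodS c G r a f) \<Longrightarrow> generates_vac c G"
proof (rule all_good)
  fix x :: sdel
  assume h: "\<And>r a f. goodS c G r a f"
  obtain p z where x: "x = (p, z)" by (cases x)
  have "goodP c G p"
    by (subst pm_decomp) (rule goodP_sum, simp, use h in \<open>auto simp: goodS_def\<close>)
  then show "good c G x" using x goodP_good by simp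
qed

lemma goodS_add: "goodS c G r a f \<Longrightarrow> goodS c G r a g \<Longrightarrow> goodS c G r a (f + g)"
  unfolding goodS_def by (simp add: single_add goodP_add)

lemma goodS_smult: "goodS c G r a f \<Longrightarrow> goodS c G r a (smult k f)"
  unfolding goodS_def using goodP_smult[of c G "Poly_Mapping.single (r, a) f" k] by simp

lemma goodS_uminus: "goodS c G r a f \<Longrightarrow> goodS c G r a (- f)"
  unfolding goodS_def by (simp add: single_uminus goodP_uminus)

lemma goodS_diff: "goodS c G r a f \<Longrightarrow> goodS c G r a g \<Longrightarrow> goodS c G r a (f - g)"
  unfolding goodS_def by (simp add: single_diff goodP_diff)

lemma goodP_br: assumes "goodS c G r a f" "goodS c G s b g"
  shows "goodP c G (fst (sd_bracket (Mono r a f) (Mono s b g)))"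
proof -
  have "good c G (sd_bracket (Mono r a f) (Mono s b g))"
    using assms by (intro good_br) (simp_all only: goodS_mono)
  then have "good c G (fst (sd_bracket (Mono r a f) (Mono s b g)), snd (sd_bracket (Mono r a f) (Mono s b g)))"
    by (simp only: prod.collapse)
  then show ?thesis by (rule good_goodP)
qed

lemma goodP_br2:
  assumes "goodS c G r a f" "goodP c G (Poly_Mapping.single (s1, b1) g1 + Poly_Mapping.single (s2, b2) g2)"
    "sgn_par (Mono r a f) (Mono s1 b1 g1) = sgn_par (Mono r a f) (Mono s2 b2 g2)"
  shows "goodP c G (fst (sd_bracket (Mono r a f) (Mono s1 b1 g1)) + fst (sd_bracket (Mono r a f) (Mono s2 b2 g2)))"
proof -
  have "good c G (sd_add (mono_el (Mono s1 b1 g1)) (mono_el (Mono s2 b2 g2)))"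
    using assms(2) by (simp add: sd_add_def goodP_def)
  then have "good c G (sd_add (sd_bracket (Mono r a f) (Mono s1 b1 g1)) (sd_bracket (Mono r a f) (Mono s2 b2 g2)))"
    using assms(1,3) by (intro good_br2) (simp_all only: goodS_mono)
  then show ?thesis unfolding sd_add_def by (rule good_goodP)
qed




lemma good_gen: assumes "(a, k) \<in> G" shows "goodS c G n a (- ffD k)"
proof -
  have "good c G (mono_el (Jmode a k n))"
    unfolding good_def
  proof
    fix u assume "u \<in> iter_prods G"
    from iter_prods.ip_step[OF assms this, of "n + int k"]
    show "wd (mono_el (Jmode a k n) # u) \<in> VV c G" by (simp add: iter_VV)
  qed
  then show ?thesis by (simp only: Jmode_def goodS_mono)
qed

lemma ffD_0: "ffD 0 = 1" by (simp add: ffD_def)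
lemma ffD_1: "ffD 1 = [:0, 1:]" by (simp add: ffD_def)
lemma ffD_Suc: "ffD (Suc k) = ffD k * [:- of_nat k, 1:]" by (simp add: ffD_def)

lemma ffD_deg: "degree (ffD k) = k \<and> lead_coeff (ffD k) = 1"
proof (induction k)
  case 0 then show ?case by (simp add: ffD_0)
next
  case (Suc k)
  then have nz: "ffD k \<noteq> 0" by auto
  have "degree (ffD (Suc k)) = degree (ffD k) + degree [:- of_nat k, 1 :: complex:]"
    unfolding ffD_Suc by (rule degree_mult_eq) (use nz in auto)
  moreover have "lead_coeff (ffD (Suc k)) = lead_coeff (ffD k) * lead_coeff [:- of_nat k, 1 :: complex:]"
    by (simp only: ffD_Suc lead_coeff_mult)
  moreover from Suc.IH have d: "degree (ffD k) = k" and l: "coeff (ffD k) k = 1" by auto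
  ultimately show ?case by simp
qed

definition dlt :: "complex poly \<Rightarrow> complex poly" where
  "dlt q = shiftD q 1 - q"

lemma dlt_add: "dlt (p + q) = dlt p + dlt q"
  by (simp add: dlt_def shiftD_def pcompose_add)
lemma dlt_smult: "dlt (smult a p) = smult a (dlt p)"
  by (simp add: dlt_def shiftD_def pcompose_smult smult_diff_right)

lemma shift_ffD_Suc: "shiftD (ffD (Suc k)) 1 = [:1, 1:] * ffD k"
proof -
  have "shiftD (ffD (Suc k)) 1 = (\<Prod>i<Suc k. pcompose [:- of_nat i, 1:] [:1, 1:])"
    unfolding shiftD_def ffD_def of_int_1 by (rule pcompose_prod)
  also have "\<dots> = (\<Prod>i<Suc k. [:1 - of_nat i, 1:])"
    by (rule prod.cong) (simp_all add: pcompose_pCons)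
  also have "\<dots> = [:1 - of_nat 0, 1:] * (\<Prod>i<k. [:1 - of_nat (Suc i), 1:])"
    by (rule prod.lessThan_Suc_shift)
  also have "\<dots> = [:1, 1:] * ffD k"
    by (simp add: ffD_def)
  finally show ?thesis .
qed

lemma dlt_ffD: "dlt (ffD (Suc k)) = smult (of_nat (Suc k)) (ffD k)"
proof -
  have "dlt (ffD (Suc k)) = [:1, 1:] * ffD k - ffD k * [:- of_nat k, 1:]"
    unfolding dlt_def by (subst shift_ffD_Suc) (simp only: ffD_Suc)
  also have "\<dots> = smult (of_nat (Suc k)) (ffD k)"
  proof -
    have a: "[:1, 1:] * ffD k = ffD k + pCons 0 (ffD k)" by simp
    have b: "ffD k * [:- of_nat k, 1:] = smult (- of_nat k) (ffD k) + pCons 0 (ffD k)" by simp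
    show ?thesis unfolding a b by (rule poly_eqI) (simp add: ring_distribs)
  qed
  finally show ?thesis .
qed

lemma dlt_surj_deg: "degree h \<le> d \<Longrightarrow> \<exists>q. dlt q = h"
proof (induction d arbitrary: h)
  case 0
  then obtain a where h: "h = [:a:]" by (metis degree0_coeffs le_zero_eq)
  have "dlt (smult a (ffD 1)) = h"
    using dlt_ffD[of 0] by (simp add: dlt_smult h ffD_0)
  then show ?case by blast
next
  case (Suc d)
  define h' where "h' = h - smult (coeff h (Suc d)) (ffD (Suc d))"
  have dg: "degree (ffD (Suc d)) = Suc d" and lc: "coeff (ffD (Suc d)) (Suc d) = 1"
    using ffD_deg[of "Suc d"] by auto
  have "degree h' \<le> d"
  proof (rule degree_le, intro allI impI)
    fix i assume "d < i"
    show "coeff h' i = 0"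
    proof (cases "i = Suc d")
      case True then show ?thesis by (simp add: h'_def lc)
    next
      case False
      then have "i > Suc d" using \<open>d < i\<close> by simp
      then show ?thesis using Suc.prems dg by (simp add: h'_def coeff_eq_0)
    qed
  qed
  then obtain q where q: "dlt q = h'" using Suc.IH by blast
  have nz: "(of_nat (Suc (Suc d)) :: complex) \<noteq> 0" by (simp only: of_nat_eq_0_iff)
  then have nz2: "(2::complex) + of_nat d \<noteq> 0" by simp
  have "dlt (q + smult (coeff h (Suc d) / of_nat (Suc (Suc d))) (ffD (Suc (Suc d)))) = h"
    by (simp only: dlt_add dlt_smult dlt_ffD q) (simp add: h'_def nz2)
  then show ?case by blast
qed

lemma dlt_surj: "\<exists>q. dlt q = h"
  using dlt_surj_deg[of h "degree h"] by simp



lemma goodS_0: "goodS c G n a 0"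
  by (simp add: goodS_def goodP_0)

lemma pCons_split: "pCons a p = smult a 1 + [:0, 1:] * p"
  by simp

lemma S_case:
  assumes H1: "\<And>n a. goodS c G n a 1" and H2: "\<And>n. goodS c G n L0 [:0, 1:]"
  shows "goodS c G n a f"
proof -
  have Lp: "goodS c G n Lp f" for n f
  proof (induction f arbitrary: n)
    case 0 show ?case by (rule goodS_0)
  next
    case (pCons a p n)
    have "goodP c G (fst (sd_bracket (Mono n L0 [:0, 1:]) (Mono 0 Lp p)))"
      by (rule goodP_br[OF H2 pCons.IH])
    then have "goodS c G n Lp ([:0, 1:] * p)"
      by (simp add: goodS_def term_el_def lbl_mult_def lbl_of_def shiftD_def)
    then show ?case by (subst pCons_split) (intro goodS_add goodS_smult H1)
  qed
  have Lm: "goodS c G n Lm f" for n f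
  proof (induction f arbitrary: n)
    case 0 show ?case by (rule goodS_0)
  next
    case (pCons a p n)
    have "goodP c G (fst (sd_bracket (Mono 0 L0 [:0, 1:]) (Mono n Lm p)))"
      by (rule goodP_br[OF H2 pCons.IH])
    moreover have "fst (sd_bracket (Mono 0 L0 [:0, 1:]) (Mono n Lm p)) = - Poly_Mapping.single (n, Lm) (p * [:0, 1:])"
      by (simp add: term_el_def lbl_mult_def lbl_of_def shiftD_def lbl_odd_def single_uminus)
    ultimately have "goodP c G (- Poly_Mapping.single (n, Lm) (p * [:0, 1:]))" by simp
    then have "goodS c G n Lm (p * [:0, 1:])"
      using goodP_uminus by (force simp: goodS_def)
    then have "goodS c G n Lm ([:0, 1:] * p)" by (simp only: mult.commute)
    then show ?case by (subst pCons_split) (intro goodS_add goodS_smult H1)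
  qed
  have E: "goodP c G (Poly_Mapping.single (n, L0) f + Poly_Mapping.single (n, L1) f)" for n f
  proof -
    have "goodP c G (fst (sd_bracket (Mono n Lp f) (Mono 0 Lm 1)))"
      by (rule goodP_br[OF Lp Lm])
    then show ?thesis
      by (simp add: term_el_def lbl_mult_def lbl_of_def shiftD_def lbl_odd_def pcompose_1 single_uminus)
  qed
  have F: "goodP c G (Poly_Mapping.single (n, L0) q + Poly_Mapping.single (n, L1) (shiftD q 1))" for n q
  proof -
    have "goodP c G (fst (sd_bracket (Mono 1 Lp 1) (Mono (n - 1) Lm q)))"
      by (rule goodP_br[OF Lp Lm])
    then show ?thesis
      by (simp add: term_el_def lbl_mult_def lbl_of_def shiftD_def lbl_odd_def pcompose_1 single_uminus)
  qed
  have L1: "goodS c G n L1 h" for n h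
  proof -
    obtain q where q: "dlt q = h" using dlt_surj by blast
    have "goodP c G ((Poly_Mapping.single (n, L0) q + Poly_Mapping.single (n, L1) (shiftD q 1))
        - (Poly_Mapping.single (n, L0) q + Poly_Mapping.single (n, L1) q))"
      by (rule goodP_diff[OF F E])
    then show ?thesis using q unfolding goodS_def dlt_def by (simp flip: single_diff)
  qed
  have L0: "goodS c G n L0 h" for n h
  proof -
    have "goodP c G ((Poly_Mapping.single (n, L0) h + Poly_Mapping.single (n, L1) h) - Poly_Mapping.single (n, L1) h)"
      using goodP_diff[OF E L1[unfolded goodS_def]] by blast
    then show ?thesis by (simp add: goodS_def)
  qed
  show ?thesis using Lp Lm L0 L1 by (cases a) auto
qed



lemma T_case:
  assumes H1: "\<And>n a. goodS c G n a 1" and Hp: "\<And>n. goodS c G n Lp [:0, 1:]"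
    and Hm: "\<And>n. goodS c G n Lm [:0, 1:]"
  shows "goodS c G n L0 [:0, 1:]"
proof -
  have Y: "goodP c G (Poly_Mapping.single (m, L0) ([:0, 1:] * [:0, 1:]) + Poly_Mapping.single (m, L1) ([:of_int m, 1:] * [:0, 1:]))" for m
  proof -
    have "goodP c G (fst (sd_bracket (Mono m Lp [:0, 1:]) (Mono 0 Lm [:0, 1:])))"
      by (rule goodP_br[OF Hp Hm])
    moreover have "fst (sd_bracket (Mono m Lp [:0, 1:]) (Mono 0 Lm [:0, 1:])) =
       Poly_Mapping.single (m, L0) ([:0, 1:] * [:0, 1:]) + Poly_Mapping.single (m, L1) ([:of_int m, 1:] * [:0, 1:])"
      by (rule poly_mapping_eqI) (simp add: term_el_def lbl_mult_def lbl_of_def shiftD_def lbl_odd_def pcompose_pCons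
          lookup_add lookup_minus lookup_single when_def)
    ultimately show ?thesis by simp
  qed
  have "goodP c G (fst (sd_bracket (Mono 1 L0 1) (Mono (n - 1) L0 ([:0, 1:] * [:0, 1:])))
       + fst (sd_bracket (Mono 1 L0 1) (Mono (n - 1) L1 ([:of_int (n - 1), 1:] * [:0, 1:]))))"
    by (rule goodP_br2[OF H1 Y]) (simp add: sgn_par_def lbl_odd_def)
  moreover have "fst (sd_bracket (Mono 1 L0 1) (Mono (n - 1) L0 ([:0, 1:] * [:0, 1:])))
       + fst (sd_bracket (Mono 1 L0 1) (Mono (n - 1) L1 ([:of_int (n - 1), 1:] * [:0, 1:])))
       = Poly_Mapping.single (n, L0) [:-1, -2:]"
    by (rule poly_mapping_eqI) (simp add: term_el_def lbl_mult_def lbl_of_def shiftD_def lbl_odd_def pcompose_pCons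
          pcompose_1 lookup_add lookup_minus lookup_single when_def)
  ultimately have "goodS c G n L0 [:-1, -2:]"
    by (simp add: goodS_def)
  then have "goodS c G n L0 (smult (-1/2) ([:-1, -2:] + 1))"
    by (intro goodS_smult goodS_add H1)
  moreover have "smult (-1/2) ([:-1, -2:] + 1) = ([:0, 1:] :: complex poly)" by (simp add: one_pCons)
  ultimately show ?thesis by simp
qed



lemma gen1: "(a, 0) \<in> G \<Longrightarrow> goodS c G n a 1"
  using goodS_uminus[OF good_gen[of a 0 G c n]] by (simp add: ffD_0)

lemma gen2: "(a, 1) \<in> G \<Longrightarrow> goodS c G n a [:0, 1:]"
  using goodS_uminus[OF good_gen[of a 1 G c n]] ffD_1 by simp

theorem mainTheorem3:
  fixes c :: complex
  shows "generates_vac c {(L0, 0), (L1, 0), (Lp, 0), (Lm, 0), (L0, 1)}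
       \<and> generates_vac c {(L0, 0), (L1, 0), (Lp, 0), (Lm, 0), (Lp, 1), (Lm, 1)}"
proof
  let ?S = "{(L0, 0), (L1, 0), (Lp, 0), (Lm, 0), (L0, 1)} :: (lbl \<times> nat) set"
  have H1: "goodS c ?S n a 1" for n a by (rule gen1) (cases a; simp)
  have H2: "goodS c ?S n L0 [:0, 1:]" for n by (rule gen2) simp
  show "generates_vac c ?S"
    by (rule goodS_all) (rule S_case[OF H1 H2])
next
  let ?T = "{(L0, 0), (L1, 0), (Lp, 0), (Lm, 0), (Lp, 1), (Lm, 1)} :: (lbl \<times> nat) set"
  have H1: "goodS c ?T n a 1" for n a by (rule gen1) (cases a; simp)
  have Hp: "goodS c ?T n Lp [:0, 1:]" for n by (rule gen2) simp
  have Hm: "goodS c ?T n Lm [:0, 1:]" for n by (rule gen2) simp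
  have H2: "goodS c ?T n L0 [:0, 1:]" for n by (rule T_case[OF H1 Hp Hm])
  show "generates_vac c ?T"
    by (rule goodS_all) (rule S_case[OF H1 H2])
qed

end
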